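(* (Stability.) Let $1\le m\le n$, $x=(x_1,\dots,x_m)$, $y=(y_1,\dots,y_n)$, and write $x^{(m)}=(x_1,\dots,x_{m-1})$, $y^{(n)}=(y_1,\dots,y_{n-1})$. Then \[F(u;x,y;t)\big|_{x_my_n=1}=F(u;x^{(m)},y^{(n)};t)\quad\text{and}\quad F(u;x,y;t)\big|_{x_m=y_n=0}=(1-u)F(ut;x^{(m)},y^{(n)};t).\]
   Context: For $x=(x_1,\dots,x_m)$, $y=(y_1,\dots,y_n)$, \[F(u;x,y;t)=\sum_{I\subseteq\{1,\dots,m\}}(-u)^{|I|}t^{\binom{|I|}{2}}\prod_{i\in I,\ j\in\{1,\dots,m\}\setminus I}\frac{tx_i-x_j}{x_i-x_j}\prod_{i\in I}\prod_{j=1}^n\frac{1-x_iy_j}{1-tx_iy_j}.\] *)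

theory Defs
  imports Complex_Main
begin

(* F(u; x_1..x_m, y_1..y_n; t), variables evaluated pointwise in a field;
   x and y are indexed from 1, only x 1..x m and y 1..y n are used. *)
definition F :: "'a::field \<Rightarrow> (nat \<Rightarrow> 'a) \<Rightarrow> nat \<Rightarrow> (nat \<Rightarrow> 'a) \<Rightarrow> nat \<Rightarrow> 'a \<Rightarrow> 'a" where
  "F u x m y n t =
     (\<Sum>I\<in>Pow {1..m}. (-u) ^ card I * t ^ (card I choose 2)
        * (\<Prod>i\<in>I. \<Prod>j\<in>{1..m} - I. (t * x i - x j) / (x i - x j))
        * (\<Prod>i\<in>I. \<Prod>j\<in>{1..n}. (1 - x i * y j) / (1 - t * x i * y j)))"

end

theory Submission
  imports Defs
begin

theorem lemma3p1:
  fixes u t :: "'a::field_char_0" and x y :: "nat \<Rightarrow> 'a" and m n :: nat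
  assumes "1 \<le> m" and "m \<le> n"
    and "inj_on x {1..m}"
    and "\<forall>i\<in>{1..m}. \<forall>j\<in>{1..n}. 1 - t * x i * y j \<noteq> 0"
  shows "(x m * y n = 1 \<longrightarrow> F u x m y n t = F u x (m - 1) y (n - 1) t)
       \<and> (x m = 0 \<and> y n = 0 \<longrightarrow> F u x m y n t = (1 - u) * F (u * t) x (m - 1) y (n - 1) t)"
proof -
  obtain k where k: "m = Suc k" using assms(1) by (cases m) auto
  obtain l where l: "n = Suc l" using assms(1,2) by (cases n) auto
  define X where "X I M = (\<Prod>i\<in>I. \<Prod>j\<in>{1..M} - I. (t * x i - x j) / (x i - x j))" for I M
  define Y where "Y I N = (\<Prod>i\<in>I. \<Prod>j\<in>{1..N}. (1 - x i * y j) / (1 - t * x i * y j))" for I N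
  have Fd: "F v x M y N t = (\<Sum>I\<in>Pow {1..M}. (-v)^card I * t^(card I choose 2) * X I M * Y I N)"
    for v M N by (simp add: F_def X_def Y_def)
  have Pm: "{1..m} = insert m {1..k}" "m \<notin> {1..k}" using k by auto
  have Pn: "{1..n} = insert n {1..l}" "n \<notin> {1..l}" using l by auto
  have split: "sum g (Pow {1..m}) = sum g (Pow {1..k}) + (\<Sum>J\<in>Pow {1..k}. g (insert m J))" for g :: "nat set \<Rightarrow> 'a"
  proof -
    have "sum g (Pow {1..m}) = sum g (Pow {1..k} \<union> insert m ` Pow {1..k})"
      by (subst Pm(1)) (simp only: Pow_insert)
    also have "\<dots> = sum g (Pow {1..k}) + sum g (insert m ` Pow {1..k})"
      by (rule sum.union_disjoint) (use Pm in auto)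
    also have "sum g (insert m ` Pow {1..k}) = (\<Sum>J\<in>Pow {1..k}. g (insert m J))"
    proof (rule sum.reindex_cong[where l="insert m"])
      show "inj_on (insert m) (Pow {1..k})"
      proof (rule inj_onI)
        fix A B assume "A \<in> Pow {1..k}" "B \<in> Pow {1..k}" "insert m A = insert m B"
        moreover have "m \<notin> A" "m \<notin> B" using Pm calculation by auto
        ultimately show "A = B" by (metis Diff_insert_absorb)
      qed
    qed auto
    finally show ?thesis .
  qed
  have xne: "x i \<noteq> x m" if "i \<in> {1..k}" for i
    using assms(3) that Pm by (metis inj_onD insertCI)
  have Xs: "X I m = X I k * (\<Prod>i\<in>I. (t * x i - x m) / (x i - x m))" if "I \<subseteq> {1..k}" for I
  proof -
    have "{1..m} - I = insert m ({1..k} - I)" using Pm that by auto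
    moreover have "m \<notin> {1..k} - I" using Pm by auto
    ultimately show ?thesis unfolding X_def by (simp add: prod.distrib[symmetric] mult.commute)
  qed
  have Ys: "Y I n = Y I l * (\<Prod>i\<in>I. (1 - x i * y n) / (1 - t * x i * y n))" for I
    unfolding Y_def using Pn by (simp del: times_divide_eq_left add: prod.distrib[symmetric] mult.commute)
  have Xi: "X (insert m J) m = (\<Prod>j\<in>{1..k}-J. (t * x m - x j) / (x m - x j)) * X J k"
    if "J \<subseteq> {1..k}" for J
  proof -
    have e: "{1..m} - insert m J = {1..k} - J" using Pm that by auto
    have "m \<notin> J" "finite J" using Pm that finite_subset by auto
    thus ?thesis unfolding X_def e by simp
  qed
  have Yi: "Y (insert m J) n = (\<Prod>j\<in>{1..n}. (1 - x m * y j) / (1 - t * x m * y j)) * Y J n"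
    if "J \<subseteq> {1..k}" for J
  proof -
    have "m \<notin> J" "finite J" using Pm that finite_subset by auto
    thus ?thesis unfolding Y_def by simp
  qed
  have cJ: "card (insert m J) = Suc (card J)" if "J \<subseteq> {1..k}" for J
  proof -
    have "m \<notin> J" "finite J" using Pm that finite_subset by auto
    thus ?thesis by simp
  qed
  have ch: "Suc c choose 2 = (c choose 2) + c" for c
    by (simp add: numeral_2_eq_2)
  have part1: "F u x m y n t = F u x (m - 1) y (n - 1) t" if h: "x m * y n = 1"
  proof -
    have xm: "x m \<noteq> 0" using h by auto
    have yn: "y n = 1 / x m" using h xm by (simp add: field_simps)
    have z: "(\<Sum>J\<in>Pow {1..k}. (-u)^card (insert m J) * t^(card (insert m J) choose 2)
        * X (insert m J) m * Y (insert m J) n) = 0"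
    proof (rule sum.neutral, intro ballI)
      fix J assume J: "J \<in> Pow {1..k}"
      have "(\<Prod>j\<in>{1..n}. (1 - x m * y j) / (1 - t * x m * y j)) = 0"
        by (rule prod_zero) (use h Pn in auto)
      thus "(-u)^card (insert m J) * t^(card (insert m J) choose 2)
        * X (insert m J) m * Y (insert m J) n = 0" using Yi J by simp
    qed
    have w: "(-u)^card I * t^(card I choose 2) * X I m * Y I n
        = (-u)^card I * t^(card I choose 2) * X I k * Y I l" if I: "I \<in> Pow {1..k}" for I
    proof -
      have "(\<Prod>i\<in>I. (t * x i - x m) / (x i - x m)) * (\<Prod>i\<in>I. (1 - x i * y n) / (1 - t * x i * y n)) = 1"
        unfolding prod.distrib[symmetric]
      proof (rule prod.neutral, intro ballI)
        fix i assume i: "i \<in> I"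
        have i1: "i \<in> {1..k}" using i I by auto
        have d1: "x i - x m \<noteq> 0" using xne[OF i1] by simp
        have "1 - t * x i * y n \<noteq> 0" using assms(4) i1 Pm Pn by auto
        hence d2: "x m - t * x i \<noteq> 0" using xm yn by (auto simp: field_simps)
        show "(t * x i - x m) / (x i - x m) * ((1 - x i * y n) / (1 - t * x i * y n)) = 1"
        proof -
          have e1: "1 - x i * y n = (x m - x i) / x m" using xm unfolding yn by (simp add: field_simps)
          have e2: "1 - t * x i * y n = (x m - t * x i) / x m" using xm unfolding yn by (simp add: field_simps)
          have e3: "(t * x i - x m) * (x m - x i) = (x i - x m) * (x m - t * x i)" by (simp add: algebra_simps)
          have "(x m - x i) / x m / ((x m - t * x i) / x m) = (x m - x i) / (x m - t * x i)"
            using xm d2 by (simp add: divide_simps)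
          hence "(t * x i - x m) / (x i - x m) * ((1 - x i * y n) / (1 - t * x i * y n))
             = ((t * x i - x m) * (x m - x i)) / ((x i - x m) * (x m - t * x i))"
            unfolding e1 e2 by (simp only: times_divide_times_eq)
          also have "\<dots> = 1" unfolding e3 using d1 d2 by simp
          finally show ?thesis .
        qed
      qed
      thus ?thesis using Xs[of I] Ys[of I] I by (simp add: algebra_simps)
    qed
    have "(\<Sum>I\<in>Pow {1..k}. (-u)^card I * t^(card I choose 2) * X I m * Y I n)
       = (\<Sum>I\<in>Pow {1..k}. (-u)^card I * t^(card I choose 2) * X I k * Y I l)"
      by (rule sum.cong[OF refl]) (rule w)
    thus ?thesis unfolding Fd split z using k l by simp
  qed
  have part2: "F u x m y n t = (1 - u) * F (u * t) x (m - 1) y (n - 1) t" if h: "x m = 0" "y n = 0"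
  proof -
    have xi0: "x i \<noteq> 0" if "i \<in> {1..k}" for i using xne[OF that] h by simp
    have w1: "(-u)^card I * t^(card I choose 2) * X I m * Y I n
        = (-(u*t))^card I * t^(card I choose 2) * X I k * Y I l" if I: "I \<in> Pow {1..k}" for I
    proof -
      have a: "(\<Prod>i\<in>I. (t * x i - x m) / (x i - x m)) = t ^ card I"
      proof -
        have "(\<Prod>i\<in>I. (t * x i - x m) / (x i - x m)) = (\<Prod>i\<in>I. t)"
        proof (rule prod.cong)
          fix i assume "i \<in> I"
          hence "x i \<noteq> 0" using I xi0 by blast
          thus "(t * x i - x m) / (x i - x m) = t" using h(1) by simp
        qed simp
        thus ?thesis by simp
      qed
      have b: "(\<Prod>i\<in>I. (1 - x i * y n) / (1 - t * x i * y n)) = 1" using h by simp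
      have p: "(-(u*t))^card I = (-u)^card I * t^card I" by (simp add: power_mult_distrib[symmetric])
      have q: "X I m = X I k * t ^ card I" "Y I n = Y I l" using Xs[of I] Ys[of I] I a b by auto
      show ?thesis unfolding p q by (simp only: mult_ac)
    qed
    have w2: "(-u)^card (insert m J) * t^(card (insert m J) choose 2) * X (insert m J) m * Y (insert m J) n
        = - u * ((-(u*t))^card J * t^(card J choose 2) * X J k * Y J l)" if J: "J \<in> Pow {1..k}" for J
    proof -
      have a: "(\<Prod>j\<in>{1..k}-J. (t * x m - x j) / (x m - x j)) = 1"
      proof (rule prod.neutral, rule ballI)
        fix j assume "j \<in> {1..k} - J"
        hence "x j \<noteq> 0" using xi0 by blast
        thus "(t * x m - x j) / (x m - x j) = 1" using h(1) by simp
      qed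
      have b: "(\<Prod>j\<in>{1..n}. (1 - x m * y j) / (1 - t * x m * y j)) = 1" using h by simp
      have c: "(\<Prod>i\<in>J. (1 - x i * y n) / (1 - t * x i * y n)) = 1" using h by simp
      have q: "X (insert m J) m = X J k" "Y (insert m J) n = Y J l"
        using Xi[of J] Yi[of J] Ys[of J] J a b c by auto
      have p: "(-(u*t))^card J = (-u)^card J * t^card J" by (simp add: power_mult_distrib[symmetric])
      have r: "(-u)^card (insert m J) = (-u) * (-u)^card J" "t^(card (insert m J) choose 2) = t^(card J choose 2) * t^card J"
        using cJ[of J] ch J by (auto simp: power_add)
      show ?thesis unfolding p q r by (simp only: mult_ac minus_mult_left)
    qed
    have s1: "(\<Sum>I\<in>Pow {1..k}. (-u)^card I * t^(card I choose 2) * X I m * Y I n) = F (u*t) x (m-1) y (n-1) t"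
      unfolding Fd using w1 k l by (intro sum.cong) auto
    have s2: "(\<Sum>J\<in>Pow {1..k}. (-u)^card (insert m J) * t^(card (insert m J) choose 2) * X (insert m J) m * Y (insert m J) n) = - u * F (u*t) x (m-1) y (n-1) t"
      unfolding Fd sum_distrib_left using w2 k l by (intro sum.cong) auto
    show ?thesis unfolding Fd[of u m n] split s1 s2 by (simp add: algebra_simps)
  qed
  show ?thesis using part1 part2 by blast
qed

end
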